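(* Let $t$ and $\ell$ be positive integers with $\ell<2t$. Then there are only finitely many matroids (up to isomorphism) with the $(t,\ell)$-property.
   Context: A matroid $M$ has the $(t,\ell)$-property if every $t$-element subset of $E(M)$ is contained in both an $\ell$-element circuit and an $\ell$-element cocircuit of $M$. *)

theory Defs
  imports Main
begin

definition matroid :: "'a set \<Rightarrow> ('a set \<Rightarrow> bool) \<Rightarrow> bool" where
  "matroid E indep \<longleftrightarrow>
     finite E \<and>
     indep {} \<and>
     (\<forall>X. indep X \<longrightarrow> X \<subseteq> E) \<and>
     (\<forall>X Y. indep Y \<and> X \<subseteq> Y \<longrightarrow> indep X) \<and>
     (\<forall>X Y. indep X \<and> indep Y \<and> card X < card Y \<longrightarrow>
        (\<exists>y \<in> Y - X. indep (insert y X)))"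

definition basis :: "'a set \<Rightarrow> ('a set \<Rightarrow> bool) \<Rightarrow> 'a set \<Rightarrow> bool" where
  "basis E indep B \<longleftrightarrow> indep B \<and> (\<forall>X. indep X \<and> B \<subseteq> X \<longrightarrow> X = B)"

definition circuit :: "'a set \<Rightarrow> ('a set \<Rightarrow> bool) \<Rightarrow> 'a set \<Rightarrow> bool" where
  "circuit E indep C \<longleftrightarrow> C \<subseteq> E \<and> \<not> indep C \<and> (\<forall>x \<in> C. indep (C - {x}))"

definition dual_indep :: "'a set \<Rightarrow> ('a set \<Rightarrow> bool) \<Rightarrow> 'a set \<Rightarrow> bool" where
  "dual_indep E indep X \<longleftrightarrow> X \<subseteq> E \<and> (\<exists>B. basis E indep B \<and> X \<inter> B = {})"

definition cocircuit :: "'a set \<Rightarrow> ('a set \<Rightarrow> bool) \<Rightarrow> 'a set \<Rightarrow> bool" where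
  "cocircuit E indep C \<longleftrightarrow> circuit E (dual_indep E indep) C"

definition tl_property :: "nat \<Rightarrow> nat \<Rightarrow> 'a set \<Rightarrow> ('a set \<Rightarrow> bool) \<Rightarrow> bool" where
  "tl_property t l E indep \<longleftrightarrow>
     (\<forall>X. X \<subseteq> E \<and> card X = t \<longrightarrow>
        (\<exists>C. X \<subseteq> C \<and> card C = l \<and> circuit E indep C) \<and>
        (\<exists>D. X \<subseteq> D \<and> card D = l \<and> cocircuit E indep D))"

definition matroid_iso :: "'a set \<Rightarrow> ('a set \<Rightarrow> bool) \<Rightarrow> 'b set \<Rightarrow> ('b set \<Rightarrow> bool) \<Rightarrow> bool" where
  "matroid_iso E1 I1 E2 I2 \<longleftrightarrow>
     (\<exists>f. bij_betw f E1 E2 \<and> (\<forall>X. X \<subseteq> E1 \<longrightarrow> (I1 X \<longleftrightarrow> I2 (f ` X))))"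

end

theory Submission
  imports Defs
begin

lemma m_finite: "matroid E indep \<Longrightarrow> finite E" by (simp add: matroid_def)
lemma m_empty: "matroid E indep \<Longrightarrow> indep {}" by (simp add: matroid_def)
lemma m_sub: "matroid E indep \<Longrightarrow> indep X \<Longrightarrow> X \<subseteq> E" by (simp add: matroid_def)
lemma m_mono: "matroid E indep \<Longrightarrow> indep Y \<Longrightarrow> X \<subseteq> Y \<Longrightarrow> indep X"
  unfolding matroid_def by blast
lemma m_aug: "matroid E indep \<Longrightarrow> indep X \<Longrightarrow> indep Y \<Longrightarrow> card X < card Y \<Longrightarrow>
   \<exists>y\<in>Y-X. indep (insert y X)"
  unfolding matroid_def by blast
lemma m_ifin: "matroid E indep \<Longrightarrow> indep X \<Longrightarrow> finite X"
  by (rule finite_subset[OF m_sub m_finite])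

lemma circ_ne: "matroid E indep \<Longrightarrow> circuit E indep C \<Longrightarrow> C \<noteq> {}"
  using m_empty unfolding circuit_def by blast

lemma m_max_ext:
  assumes m: "matroid E indep" and "indep I" "I \<subseteq> A"
  shows "\<exists>J. I \<subseteq> J \<and> J \<subseteq> A \<and> indep J \<and> (\<forall>y\<in>A-J. \<not> indep (insert y J))"
  using assms(2,3)
proof (induction "card (E - I)" arbitrary: I rule: less_induct)
  case less
  show ?case
  proof (cases "\<exists>y\<in>A-I. indep (insert y I)")
    case True
    then obtain y where y: "y \<in> A - I" "indep (insert y I)" by blast
    have yE: "y \<in> E" using m_sub[OF m y(2)] by blast
    have "E - insert y I = E - I - {y}" by blast
    hence "card (E - insert y I) = card (E - I - {y})" by simp
    also have "\<dots> < card (E - I)"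
      using yE y(1) m_finite[OF m] by (intro card_Diff1_less) auto
    finally have lt: "card (E - insert y I) < card (E - I)" .
    have "insert y I \<subseteq> A" using y(1) less(3) by blast
    then obtain J where "insert y I \<subseteq> J \<and> J \<subseteq> A \<and> indep J \<and> (\<forall>y\<in>A-J. \<not> indep (insert y J))"
      using less(1)[OF lt y(2)] by blast
    thus ?thesis by blast
  next
    case False thus ?thesis using less by blast
  qed
qed

lemma orth:
  assumes m: "matroid E indep" and C: "circuit E indep C" and D: "cocircuit E indep D"
    and CD: "C \<inter> D = {e}"
  shows False
proof -
  have DE: "D \<subseteq> E" and nD: "\<not> dual_indep E indep D"
    and Dx: "\<forall>x\<in>D. dual_indep E indep (D - {x})"
    using D unfolding cocircuit_def circuit_def by auto
  have eD: "e \<in> D" "e \<in> C" using CD by auto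
  obtain B where B: "basis E indep B" "(D - {e}) \<inter> B = {}"
    using Dx eD unfolding dual_indep_def by blast
  have meet: "\<And>B'. basis E indep B' \<Longrightarrow> D \<inter> B' \<noteq> {}"
    using nD DE unfolding dual_indep_def by blast
  have CE: "C \<subseteq> E" and nC: "\<not> indep C" and Ce: "indep (C - {e})"
    using C eD unfolding circuit_def by auto
  have Bi: "indep B" using B unfolding basis_def by blast
  have "C - {e} \<subseteq> E - D" using CE CD by blast
  then obtain J where J: "C - {e} \<subseteq> J" "J \<subseteq> E - D" "indep J"
      "\<forall>y\<in>(E - D)-J. \<not> indep (insert y J)"
    using m_max_ext[OF m Ce, of "E - D"] by blast
  show False
  proof (cases "card B \<le> card J")
    case True
    have "basis E indep J" unfolding basis_def
    proof (intro conjI allI impI)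
      show "indep J" by fact
      fix X assume X: "indep X \<and> J \<subseteq> X"
      show "X = J"
      proof (rule ccontr)
        assume "X \<noteq> J"
        hence "J \<subset> X" using X by blast
        hence "card J < card X" using m_ifin[OF m] X by (meson psubset_card_mono)
        hence "card B < card X" using True by linarith
        then obtain y where y: "y \<in> X - B" "indep (insert y B)" using m_aug[OF m Bi] X by blast
        then have "insert y B = B" using B(1) unfolding basis_def by blast
        thus False using y by blast
      qed
    qed
    hence "D \<inter> J \<noteq> {}" by (rule meet)
    thus False using J(2) by blast
  next
    case False
    then obtain y where y: "y \<in> B - J" "indep (insert y J)"
      using m_aug[OF m J(3) Bi] by (meson not_le)
    show False
    proof (cases "y \<in> D")
      case True
      hence "y = e" using y B(2) by blast
      hence "C \<subseteq> insert y J" using J(1) by blast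
      thus False using m_mono[OF m y(2)] nC by blast
    next
      case False
      have "y \<in> E" using m_sub[OF m Bi] y by blast
      thus False using J(4) y False by blast
    qed
  qed
qed

lemma dep_circuit:
  assumes m: "matroid E indep" and "Y \<subseteq> E" "\<not> indep Y"
  shows "\<exists>C\<subseteq>Y. circuit E indep C"
  using assms(2,3)
proof (induction "card Y" arbitrary: Y rule: less_induct)
  case less
  show ?case
  proof (cases "\<forall>x\<in>Y. indep (Y - {x})")
    case True
    hence "circuit E indep Y" using less unfolding circuit_def by blast
    thus ?thesis by blast
  next
    case False
    then obtain x where x: "x \<in> Y" "\<not> indep (Y - {x})" by blast
    have "finite Y" using less(2) m_finite[OF m] finite_subset by blast
    hence "card (Y - {x}) < card Y" using x(1) by (rule card_Diff1_less)
    then obtain C where "C \<subseteq> Y - {x}" "circuit E indep C"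
      using less(1)[of "Y - {x}"] less(2) x(2) by blast
    thus ?thesis by blast
  qed
qed

lemma petals_dep:
  assumes m: "matroid E indep"
    and circ: "\<forall>C\<in>G. circuit E indep C"
    and ker: "\<forall>C\<in>G. K \<subseteq> C \<and> K \<noteq> C"
    and sf: "\<forall>C\<in>G. \<forall>C'\<in>G. C \<noteq> C' \<longrightarrow> C \<inter> C' = K"
    and fin: "finite G" and cardG: "card K < card G"
  shows "\<not> indep (\<Union>C\<in>G. C - K)"
proof
  define Y where "Y = (\<Union>C\<in>G. C - K)"
  assume "indep (\<Union>C\<in>G. C - K)"
  hence Yi: "indep Y" unfolding Y_def .
  have "G \<noteq> {}" using cardG by auto
  then obtain C0 where C0: "C0 \<in> G" by blast
  then obtain x where x: "x \<in> C0" "x \<notin> K" using ker by blast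
  have "indep (C0 - {x})" using circ C0 x unfolding circuit_def by blast
  moreover have "K \<subseteq> C0 - {x}" using ker C0 x by blast
  ultimately have Ki: "indep K" using m_mono[OF m] by blast
  obtain J where J: "K \<subseteq> J" "J \<subseteq> K \<union> Y" "indep J" "\<forall>y\<in>(K \<union> Y) - J. \<not> indep (insert y J)"
    using m_max_ext[OF m Ki, of "K \<union> Y"] by blast
  have "\<forall>C\<in>G. \<exists>r. r \<in> C - K \<and> r \<notin> J"
  proof
    fix C assume C: "C \<in> G"
    show "\<exists>r. r \<in> C - K \<and> r \<notin> J"
    proof (rule ccontr)
      assume "\<not> ?thesis"
      hence "C \<subseteq> J" using J(1) by blast
      thus False using m_mono[OF m J(3)] circ C unfolding circuit_def by blast
    qed
  qed
  then obtain r where r: "\<forall>C\<in>G. r C \<in> C - K \<and> r C \<notin> J" by metis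
  have inj: "inj_on r G"
  proof (rule inj_onI)
    fix C C' assume a: "C \<in> G" "C' \<in> G" "r C = r C'"
    show "C = C'"
    proof (rule ccontr)
      assume "C \<noteq> C'"
      hence "C \<inter> C' = K" using sf a(1,2) by blast
      moreover have "r C \<in> C \<inter> C'" "r C \<notin> K" using r a by auto
      ultimately show False by blast
    qed
  qed
  have finY: "finite Y" using m_ifin[OF m Yi] .
  have finK: "finite K" using Ki m_ifin[OF m] by blast
  have sub: "r ` G \<subseteq> Y" using r unfolding Y_def by blast
  have "J \<subseteq> K \<union> (Y - r ` G)" using J(2) r by blast
  hence "card J \<le> card (K \<union> (Y - r ` G))" using finK finY by (intro card_mono) auto
  also have "\<dots> \<le> card K + card (Y - r ` G)" by (rule card_Un_le)
  also have "card (Y - r ` G) = card Y - card G"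
    using card_Diff_subset[OF finite_imageI[OF fin] sub] card_image[OF inj] by simp
  finally have c1: "card J \<le> card K + (card Y - card G)" .
  have "card (r ` G) \<le> card Y" using finY sub by (intro card_mono)
  hence "card G \<le> card Y" using card_image[OF inj] by simp
  hence "card J < card Y" using c1 cardG by linarith
  then obtain y where "y \<in> Y - J" "indep (insert y J)" using m_aug[OF m J(3) Yi] by blast
  thus False using J(4) by blast
qed

lemma sunflower_disj:
  assumes m: "matroid E indep"
  shows "\<lbrakk>\<forall>C\<in>G. circuit E indep C; \<forall>C\<in>G. K \<subseteq> C \<and> K \<noteq> C;
     \<forall>C\<in>G. \<forall>C'\<in>G. C \<noteq> C' \<longrightarrow> C \<inter> C' = K; finite G; n * (card K + 1) \<le> card G\<rbrakk>
     \<Longrightarrow> \<exists>D. finite D \<and> card D = n \<and> (\<forall>C\<in>D. circuit E indep C) \<and>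
        (\<forall>C\<in>D. \<forall>C'\<in>D. C \<noteq> C' \<longrightarrow> C \<inter> C' = {}) \<and> (\<forall>C\<in>D. C \<subseteq> (\<Union>C'\<in>G. C' - K))"
proof (induction n arbitrary: G)
  case 0 thus ?case by (intro exI[of _ "{}"]) auto
next
  case (Suc n)
  have "card K + 1 \<le> card G" using Suc.prems(5) by simp
  then obtain G1 where G1: "G1 \<subseteq> G" "card G1 = card K + 1" "finite G1"
    by (meson obtain_subset_with_card_n)
  have p1: "\<forall>C\<in>G1. circuit E indep C" using Suc.prems(1) G1(1) by blast
  have p2: "\<forall>C\<in>G1. K \<subseteq> C \<and> K \<noteq> C" using Suc.prems(2) G1(1) by blast
  have p3: "\<forall>C\<in>G1. \<forall>C'\<in>G1. C \<noteq> C' \<longrightarrow> C \<inter> C' = K" using Suc.prems(3) G1(1) by blast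
  have nd: "\<not> indep (\<Union>C\<in>G1. C - K)"
    by (rule petals_dep[OF m p1 p2 p3 G1(3)]) (simp add: G1(2))
  have "\<forall>C\<in>G1. C \<subseteq> E" using p1 unfolding circuit_def by blast
  hence sE: "(\<Union>C\<in>G1. C - K) \<subseteq> E" by blast
  obtain C0 where C0: "C0 \<subseteq> (\<Union>C\<in>G1. C - K)" "circuit E indep C0"
    using dep_circuit[OF m sE nd] by blast
  have "card (G - G1) = card G - card G1" using card_Diff_subset[OF G1(3) G1(1)] .
  hence c2: "n * (card K + 1) \<le> card (G - G1)" using Suc.prems(5) G1(2) by simp
  obtain D where D: "finite D" "card D = n" "\<forall>C\<in>D. circuit E indep C"
     "\<forall>C\<in>D. \<forall>C'\<in>D. C \<noteq> C' \<longrightarrow> C \<inter> C' = {}" "\<forall>C\<in>D. C \<subseteq> (\<Union>C'\<in>G - G1. C' - K)"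
    using Suc.IH[of "G - G1"] Suc.prems c2 by auto
  have disj: "\<forall>C\<in>D. C0 \<inter> C = {}"
  proof
    fix C assume C: "C \<in> D"
    show "C0 \<inter> C = {}"
    proof (rule ccontr)
      assume "C0 \<inter> C \<noteq> {}"
      then obtain u where u: "u \<in> C0" "u \<in> C" by blast
      obtain C1 where C1: "C1 \<in> G1" "u \<in> C1 - K" using u C0(1) by blast
      obtain C2 where C2: "C2 \<in> G - G1" "u \<in> C2 - K" using u D(5) C by blast
      have "C1 \<noteq> C2" using C1 C2 by blast
      hence "C1 \<inter> C2 = K" using Suc.prems(3) C1 C2 G1(1) by blast
      thus False using C1 C2 by blast
    qed
  qed
  have "C0 \<noteq> {}" using circ_ne[OF m C0(2)] .
  hence nin: "C0 \<notin> D" using disj by blast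
  show ?case
  proof (intro exI[of _ "insert C0 D"] conjI)
    show "finite (insert C0 D)" using D(1) by simp
    show "card (insert C0 D) = Suc n" using D(1,2) nin by simp
    show "\<forall>C\<in>insert C0 D. circuit E indep C" using D(3) C0(2) by blast
    show "\<forall>C\<in>insert C0 D. \<forall>C'\<in>insert C0 D. C \<noteq> C' \<longrightarrow> C \<inter> C' = {}"
      using D(4) disj by blast
    have u1: "(\<Union>C\<in>G1. C - K) \<subseteq> (\<Union>C'\<in>G. C' - K)" using G1(1) by blast
    have u2: "(\<Union>C'\<in>G - G1. C' - K) \<subseteq> (\<Union>C'\<in>G. C' - K)" by blast
    show "\<forall>C\<in>insert C0 D. C \<subseteq> (\<Union>C'\<in>G. C' - K)"
    proof
      fix C assume "C \<in> insert C0 D"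
      then consider "C = C0" | "C \<in> D" by blast
      thus "C \<subseteq> (\<Union>C'\<in>G. C' - K)"
      proof cases
        case 1 thus ?thesis using C0(1) u1 by blast
      next
        case 2 thus ?thesis using D(5) u2 by blast
      qed
    qed
  qed
qed

lemma no_disj_circuits:
  assumes m: "matroid E indep" and tl: "tl_property t l E indep" and lt: "l < 2*t"
    and D: "card D = t" "\<forall>C\<in>D. circuit E indep C" "\<forall>C\<in>D. \<forall>C'\<in>D. C \<noteq> C' \<longrightarrow> C \<inter> C' = {}"
  shows False
proof -
  have tpos: "t > 0" using lt by simp
  have "\<forall>C\<in>D. \<exists>p. p \<in> C" using circ_ne[OF m] D(2) by blast
  then obtain p where p: "\<forall>C\<in>D. p C \<in> C" by metis
  have injp: "inj_on p D"
  proof (rule inj_onI)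
    fix C C' assume a: "C \<in> D" "C' \<in> D" "p C = p C'"
    show "C = C'"
    proof (rule ccontr)
      assume "C \<noteq> C'"
      hence "C \<inter> C' = {}" using D(3) a(1,2) by blast
      moreover have "p C \<in> C \<inter> C'" using p a by auto
      ultimately show False by blast
    qed
  qed
  define Z where "Z = p ` D"
  have Zc: "card Z = t" using card_image[OF injp] D(1) unfolding Z_def by simp
  have ZE: "Z \<subseteq> E" using p D(2) unfolding circuit_def Z_def by blast
  obtain Dc where Dc: "Z \<subseteq> Dc" "card Dc = l" "cocircuit E indep Dc"
    using tl ZE Zc unfolding tl_property_def by blast
  have "\<forall>C\<in>D. \<exists>y. y \<in> C \<inter> Dc \<and> y \<noteq> p C"
  proof
    fix C assume C: "C \<in> D"
    show "\<exists>y. y \<in> C \<inter> Dc \<and> y \<noteq> p C"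
    proof (rule ccontr)
      assume "\<not> ?thesis"
      moreover have "p C \<in> C \<inter> Dc" using p C Dc(1) unfolding Z_def by blast
      ultimately have "C \<inter> Dc = {p C}" by blast
      thus False using orth[OF m _ Dc(3)] D(2) C by blast
    qed
  qed
  then obtain y where y: "\<forall>C\<in>D. y C \<in> C \<inter> Dc \<and> y C \<noteq> p C" by metis
  have injy: "inj_on y D"
  proof (rule inj_onI)
    fix C C' assume a: "C \<in> D" "C' \<in> D" "y C = y C'"
    show "C = C'"
    proof (rule ccontr)
      assume "C \<noteq> C'"
      hence "C \<inter> C' = {}" using D(3) a(1,2) by blast
      moreover have "y C \<in> C" using y a(1) by blast
      moreover have "y C' \<in> C'" using y a(2) by blast
      hence "y C \<in> C'" using a(3) by simp
      ultimately show False by blast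
    qed
  qed
  have sub: "y ` D \<subseteq> Dc - Z"
  proof
    fix u assume "u \<in> y ` D"
    then obtain C where C: "C \<in> D" "u = y C" by blast
    have "u \<notin> Z"
    proof
      assume "u \<in> Z"
      then obtain C' where C': "C' \<in> D" "u = p C'" unfolding Z_def by blast
      have "y C \<noteq> p C" using C(1) y by blast
      hence "C' \<noteq> C" using C C' by auto
      moreover have "u \<in> C" using C y by simp
      moreover have "u \<in> C'" using C' p by simp
      ultimately show False using D(3) C C' by blast
    qed
    thus "u \<in> Dc - Z" using C y by blast
  qed
  have finDc: "finite Dc" using Dc(3) m_finite[OF m] unfolding cocircuit_def circuit_def
    by (meson finite_subset)
  have "card (y ` D) \<le> card (Dc - Z)" using finDc sub by (intro card_mono) auto
  also have "\<dots> = l - t" using card_Diff_subset[OF finite_subset[OF Dc(1) finDc] Dc(1)] Zc Dc(2) by simp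
  finally have "t \<le> l - t" using card_image[OF injy] D(1) by simp
  thus False using lt tpos by arith
qed

fun sfb :: "nat \<Rightarrow> nat \<Rightarrow> nat" where
  "sfb q 0 = 2"
| "sfb q (Suc m) = q * Suc m * sfb q m"

lemma sfb_pos: "q > 0 \<Longrightarrow> sfb q m > 0"
  by (induction m) auto

lemma sunflower:
  "finite F \<Longrightarrow> \<forall>A\<in>F. finite A \<and> card A = m \<Longrightarrow> sfb q m \<le> card F \<Longrightarrow>
   \<exists>S K. S \<subseteq> F \<and> card S = q \<and> (\<forall>A\<in>S. \<forall>B\<in>S. A \<noteq> B \<longrightarrow> A \<inter> B = K)"
proof (induction m arbitrary: F)
  case 0
  have "F \<subseteq> {{}}" using 0 by auto
  hence "card F \<le> card {{}:: 'a set}" by (intro card_mono) simp_all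
  thus ?case using 0 by simp
next
  case (Suc m)
  define P where "P = (\<lambda>G. G \<subseteq> F \<and> (\<forall>A\<in>G. \<forall>B\<in>G. A \<noteq> B \<longrightarrow> A \<inter> B = {}))"
  have "P {}" unfolding P_def by simp
  moreover have "\<forall>G. P G \<longrightarrow> card G < card F + 1"
    using card_mono[OF Suc.prems(1)] unfolding P_def by (simp add: le_imp_less_Suc)
  ultimately obtain G where G: "P G" "\<forall>G'. P G' \<longrightarrow> card G' \<le> card G"
    using ex_has_greatest_nat[of P "{}" card "card F + 1"] by blast
  have GF: "G \<subseteq> F" and Gd: "\<forall>A\<in>G. \<forall>B\<in>G. A \<noteq> B \<longrightarrow> A \<inter> B = {}" using G(1) unfolding P_def by auto
  have finG: "finite G" using GF Suc.prems(1) finite_subset by blast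
  show ?case
  proof (cases "q \<le> card G")
    case True
    then obtain S where "S \<subseteq> G" "card S = q" by (meson obtain_subset_with_card_n)
    thus ?thesis using GF Gd by (intro exI[of _ S] exI[of _ "{}"]) blast
  next
    case False
    hence qpos: "q > 0" by simp
    define U where "U = \<Union>G"
    have meet: "\<forall>A\<in>F. A \<inter> U \<noteq> {}"
    proof
      fix A assume A: "A \<in> F"
      show "A \<inter> U \<noteq> {}"
      proof
        assume dis: "A \<inter> U = {}"
        have Ane: "A \<noteq> {}" using Suc.prems(2) A by auto
        have AG: "A \<notin> G" using dis Ane unfolding U_def by blast
        have "P (insert A G)" using GF Gd A dis unfolding P_def U_def by blast
        hence "card (insert A G) \<le> card G" using G(2) by blast
        thus False using AG finG by simp
      qed
    qed
    have "card U \<le> sum card G" unfolding U_def by (rule card_Union_le_sum_card)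
    also have "sum card G = sum (\<lambda>_. Suc m) G"
      by (rule sum.cong) (use GF Suc.prems(2) in auto)
    also have "\<dots> = card G * Suc m" by simp
    finally have cardU: "card U \<le> card G * Suc m" .
    have finU: "finite U" using finG GF Suc.prems(2) unfolding U_def by blast
    have "\<exists>x\<in>U. sfb q m \<le> card {A\<in>F. x \<in> A}"
    proof (rule ccontr)
      assume "\<not> ?thesis"
      hence lt: "\<forall>x\<in>U. card {A\<in>F. x \<in> A} \<le> sfb q m" by auto
      have "F = (\<Union>x\<in>U. {A\<in>F. x \<in> A})" using meet by blast
      hence "card F \<le> (\<Sum>x\<in>U. card {A\<in>F. x \<in> A})" using card_UN_le[OF finU] by metis
      also have "\<dots> \<le> (\<Sum>x\<in>U. sfb q m)" by (rule sum_mono) (use lt in auto)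
      also have "\<dots> = card U * sfb q m" by simp
      also have "\<dots> \<le> card G * Suc m * sfb q m" using cardU by simp
      also have "\<dots> < q * Suc m * sfb q m"
      proof (rule mult_strict_right_mono)
        show "card G * Suc m < q * Suc m" using False by (intro mult_strict_right_mono) auto
        show "0 < sfb q m" using sfb_pos[OF qpos] .
      qed
      finally show False using Suc.prems(3) by simp
    qed
    then obtain x where x: "x \<in> U" "sfb q m \<le> card {A\<in>F. x \<in> A}" by blast
    define Fx where "Fx = {A\<in>F. x \<in> A}"
    define F' where "F' = (\<lambda>A. A - {x}) ` Fx"
    have inj: "inj_on (\<lambda>A. A - {x}) Fx"
    proof (rule inj_onI)
      fix A B assume "A \<in> Fx" "B \<in> Fx" "A - {x} = B - {x}"
      thus "A = B" unfolding Fx_def by (metis (no_types, lifting) insert_Diff mem_Collect_eq)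
    qed
    have cF': "card F' = card Fx" unfolding F'_def by (rule card_image[OF inj])
    have h1: "\<forall>A\<in>F'. finite A \<and> card A = m" using Suc.prems(2) unfolding F'_def Fx_def by auto
    have h2: "finite F'" using Suc.prems(1) unfolding F'_def Fx_def by simp
    have h3: "sfb q m \<le> card F'" using cF' x(2) unfolding Fx_def by simp
    obtain S' K' where S': "S' \<subseteq> F'" "card S' = q"
        "\<forall>A\<in>S'. \<forall>B\<in>S'. A \<noteq> B \<longrightarrow> A \<inter> B = K'"
      using Suc.IH[OF h2 h1 h3] by blast
    have xS': "\<forall>A\<in>S'. x \<notin> A" using S'(1) unfolding F'_def by blast
    have injS: "inj_on (insert x) S'"
    proof (rule inj_onI)
      fix A B assume "A \<in> S'" "B \<in> S'" "insert x A = insert x B"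
      thus "A = B" using xS' by (metis Diff_insert_absorb)
    qed
    have "insert x ` S' \<subseteq> F"
    proof
      fix A' assume "A' \<in> insert x ` S'"
      then obtain A where "A \<in> S'" "A' = insert x A" by blast
      then obtain B where "B \<in> Fx" "A = B - {x}" using S'(1) unfolding F'_def by blast
      thus "A' \<in> F" using \<open>A' = insert x A\<close> unfolding Fx_def by (auto simp: insert_absorb)
    qed
    moreover have "card (insert x ` S') = q" using card_image[OF injS] S'(2) by simp
    moreover have "\<forall>A\<in>insert x ` S'. \<forall>B\<in>insert x ` S'. A \<noteq> B \<longrightarrow> A \<inter> B = insert x K'"
      using S'(3) by auto
    ultimately show ?thesis by blast
  qed
qed

lemma disjoint_tsets:
  assumes "finite E" "t > 0"
  shows "m * t \<le> card E \<Longrightarrow> \<exists>F. finite F \<and> card F = m \<and> (\<forall>Z\<in>F. Z \<subseteq> E \<and> card Z = t) \<and>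
           (\<forall>Z\<in>F. \<forall>Z'\<in>F. Z \<noteq> Z' \<longrightarrow> Z \<inter> Z' = {})"
proof (induction m)
  case 0 thus ?case by (intro exI[of _ "{}"]) auto
next
  case (Suc m)
  then obtain F where F: "finite F" "card F = m" "\<forall>Z\<in>F. Z \<subseteq> E \<and> card Z = t"
    "\<forall>Z\<in>F. \<forall>Z'\<in>F. Z \<noteq> Z' \<longrightarrow> Z \<inter> Z' = {}" by auto
  have "card (\<Union>F) \<le> sum card F" by (rule card_Union_le_sum_card)
  also have "sum card F = m * t" using F(2,3) by simp
  finally have cU: "card (\<Union>F) \<le> m * t" .
  have UE: "\<Union>F \<subseteq> E" using F(3) by blast
  have "card (E - \<Union>F) = card E - card (\<Union>F)"
    using card_Diff_subset[OF finite_subset[OF UE assms(1)] UE] .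
  hence "t \<le> card (E - \<Union>F)" using cU Suc.prems by simp
  then obtain Z where Z: "Z \<subseteq> E - \<Union>F" "card Z = t" by (meson obtain_subset_with_card_n)
  have Zne: "Z \<noteq> {}" using Z(2) assms(2) by auto
  have ZF: "Z \<notin> F" using Z(1) Zne by blast
  show ?case
  proof (intro exI[of _ "insert Z F"] conjI)
    show "finite (insert Z F)" using F(1) by simp
    show "card (insert Z F) = Suc m" using F(1,2) ZF by simp
    show "\<forall>Za\<in>insert Z F. Za \<subseteq> E \<and> card Za = t" using F(3) Z by blast
    show "\<forall>Za\<in>insert Z F. \<forall>Z'\<in>insert Z F. Za \<noteq> Z' \<longrightarrow> Za \<inter> Z' = {}"
      using F(4) Z(1) by blast
  qed
qed

lemma tl_circ: "tl_property t l E indep \<Longrightarrow> X \<subseteq> E \<Longrightarrow> card X = t \<Longrightarrow>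
  \<exists>C. X \<subseteq> C \<and> card C = l \<and> circuit E indep C"
  by (simp add: tl_property_def)

lemma bound:
  assumes m: "matroid E indep" and tl: "tl_property t l E indep" and lt: "l < 2 * t" and lpos: "0 < l"
  shows "card E < sfb (t * l + 1) l * t"
proof (rule ccontr)
  assume "\<not> ?thesis"
  hence big: "sfb (t * l + 1) l * t \<le> card E" by simp
  have tpos: "t > 0" using lt by simp
  obtain F where F: "finite F" "card F = sfb (t * l + 1) l" "\<forall>Z\<in>F. Z \<subseteq> E \<and> card Z = t"
    "\<forall>Z\<in>F. \<forall>Z'\<in>F. Z \<noteq> Z' \<longrightarrow> Z \<inter> Z' = {}"
    using disjoint_tsets[OF m_finite[OF m] tpos big] by blast
  have "\<forall>Z\<in>F. \<exists>C. Z \<subseteq> C \<and> card C = l \<and> circuit E indep C"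
  proof
    fix Z assume "Z \<in> F"
    hence "Z \<subseteq> E" "card Z = t" using F(3) by auto
    thus "\<exists>C. Z \<subseteq> C \<and> card C = l \<and> circuit E indep C" using tl_circ[OF tl] by blast
  qed
  then obtain c where c: "\<forall>Z\<in>F. Z \<subseteq> c Z \<and> card (c Z) = l \<and> circuit E indep (c Z)" by metis
  have cfin: "\<forall>Z\<in>F. finite (c Z)" using c m_finite[OF m] unfolding circuit_def
    by (meson finite_subset)
  have injc: "inj_on c F"
  proof (rule inj_onI)
    fix Z Z' assume Z: "Z \<in> F" "Z' \<in> F" "c Z = c Z'"
    show "Z = Z'"
    proof (rule ccontr)
      assume ne: "Z \<noteq> Z'"
      have "Z \<inter> Z' = {}" using F(4) Z ne by blast
      moreover have "finite Z" "finite Z'" using F(3) Z cfin c by (meson finite_subset)+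
      ultimately have "card (Z \<union> Z') = 2 * t" using F(3) Z by (simp add: card_Un_disjoint)
      moreover have "Z \<union> Z' \<subseteq> c Z" using c Z by blast
      ultimately have "2 * t \<le> l" using card_mono[of "c Z" "Z \<union> Z'"] cfin c Z by metis
      thus False using lt by simp
    qed
  qed
  define CC where "CC = c ` F"
  have "card CC = sfb (t * l + 1) l" unfolding CC_def using card_image[OF injc] F(2) by simp
  moreover have "finite CC" unfolding CC_def using F(1) by simp
  moreover have "\<forall>A\<in>CC. finite A \<and> card A = l" unfolding CC_def using c cfin by blast
  ultimately obtain S K where S: "S \<subseteq> CC" "card S = t * l + 1"
      "\<forall>A\<in>S. \<forall>B\<in>S. A \<noteq> B \<longrightarrow> A \<inter> B = K"
    using sunflower[of CC l "t * l + 1"] by auto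
  have finS: "finite S" using S(1) \<open>finite CC\<close> finite_subset by blast
  have Scirc: "\<forall>C\<in>S. circuit E indep C" using S(1) c unfolding CC_def by blast
  have Scard: "\<forall>C\<in>S. finite C \<and> card C = l" using S(1) c cfin unfolding CC_def by blast
  have "l > 0" using lpos .
  hence "card S \<ge> 2" using S(2) tpos by (simp add: Suc_le_eq)
  have ker: "\<forall>C\<in>S. K \<subseteq> C \<and> K \<noteq> C"
  proof
    fix C assume C: "C \<in> S"
    have "\<exists>C'\<in>S. C' \<noteq> C"
    proof (rule ccontr)
      assume "\<not> ?thesis"
      hence "S \<subseteq> {C}" by blast
      hence "card S \<le> card {C}" by (intro card_mono) simp_all
      hence "card S \<le> 1" by simp
      thus False using \<open>card S \<ge> 2\<close> by simp
    qed
    then obtain C' where C': "C' \<in> S" "C' \<noteq> C" by blast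
    have K: "C \<inter> C' = K" using S(3) C C' by blast
    show "K \<subseteq> C \<and> K \<noteq> C"
    proof
      show "K \<subseteq> C" using K by blast
      show "K \<noteq> C"
      proof
        assume "K = C"
        hence "C \<subseteq> C'" using K by blast
        hence "C = C'" using Scard C C' by (metis card_subset_eq)
        thus False using C' by simp
      qed
    qed
  qed
  obtain C0 where C0: "C0 \<in> S" using \<open>card S \<ge> 2\<close> by fastforce
  have "card K < l" using ker C0 Scard by (metis psubsetI psubset_card_mono)
  hence "card K + 1 \<le> l" by simp
  hence "t * (card K + 1) \<le> t * l" by (rule mult_le_mono2)
  hence tk: "t * (card K + 1) \<le> card S" using S(2) by linarith
  then obtain D where D: "finite D" "card D = t" "\<forall>C\<in>D. circuit E indep C"
        "\<forall>C\<in>D. \<forall>C'\<in>D. C \<noteq> C' \<longrightarrow> C \<inter> C' = {}"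
    using sunflower_disj[OF m Scirc ker S(3) finS tk] by (elim exE conjE) simp
  show False using no_disj_circuits[OF m tl lt D(2-4)] .
qed

lemma matroid_image:
  assumes m: "matroid E indep" and inj: "inj_on f E"
  shows "matroid (f ` E) (\<lambda>Y. \<exists>X. indep X \<and> Y = f ` X)"
  unfolding matroid_def
proof (intro conjI allI impI)
  show "finite (f ` E)" using m_finite[OF m] by simp
  show "\<exists>X. indep X \<and> {} = f ` X" using m_empty[OF m] by auto
  fix Y assume "\<exists>X. indep X \<and> Y = f ` X"
  thus "Y \<subseteq> f ` E" using m_sub[OF m] by blast
next
  fix X Y assume a: "(\<exists>X. indep X \<and> Y = f ` X) \<and> X \<subseteq> Y"
  then obtain X0 where X0: "indep X0" "Y = f ` X0" by blast
  let ?X1 = "{x\<in>X0. f x \<in> X}"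
  have "indep ?X1" by (rule m_mono[OF m X0(1)]) blast
  moreover have "X \<subseteq> f ` X0" using a X0 by simp
  hence "X = f ` ?X1" by blast
  ultimately show "\<exists>X'. indep X' \<and> X = f ` X'" by blast
next
  fix X Y assume a: "(\<exists>X'. indep X' \<and> X = f ` X') \<and> (\<exists>X. indep X \<and> Y = f ` X) \<and> card X < card Y"
  then obtain X1 Y1 where X1: "indep X1" "X = f ` X1" and Y1: "indep Y1" "Y = f ` Y1" by blast
  have i1: "inj_on f X1" using inj m_sub[OF m X1(1)] inj_on_subset by blast
  have i2: "inj_on f Y1" using inj m_sub[OF m Y1(1)] inj_on_subset by blast
  have "card X1 < card Y1" using a X1 Y1 card_image[OF i1] card_image[OF i2] by simp
  then obtain y where y: "y \<in> Y1 - X1" "indep (insert y X1)" using m_aug[OF m X1(1) Y1(1)] by blast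
  have "f y \<notin> X"
  proof
    assume "f y \<in> X"
    then obtain x where x: "x \<in> X1" "f y = f x" using X1 by blast
    have "y \<in> E" "x \<in> E" using y x m_sub[OF m] X1(1) Y1(1) by blast+
    hence "y = x" using inj x(2) by (simp add: inj_on_def)
    thus False using x y by blast
  qed
  moreover have "f y \<in> Y" using y Y1 by blast
  moreover have "insert (f y) X = f ` insert y X1" using X1 by simp
  ultimately show "\<exists>y\<in>Y - X. \<exists>X'. indep X' \<and> insert y X = f ` X'" using y by blast
qed

lemma finite_preds: "finite A \<Longrightarrow> finite {I :: 'b set \<Rightarrow> bool. \<forall>X. I X \<longrightarrow> X \<subseteq> A}"
proof -
  assume fA: "finite A"
  have "{I :: 'b set \<Rightarrow> bool. \<forall>X. I X \<longrightarrow> X \<subseteq> A} \<subseteq> (\<lambda>S X. X \<in> S) ` Pow (Pow A)"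
  proof
    fix I :: "'b set \<Rightarrow> bool" assume "I \<in> {I. \<forall>X. I X \<longrightarrow> X \<subseteq> A}"
    hence "{X. I X} \<in> Pow (Pow A)" by auto
    moreover have "I = (\<lambda>X. X \<in> {X. I X})" by simp
    ultimately show "I \<in> (\<lambda>S X. X \<in> S) ` Pow (Pow A)" by blast
  qed
  thus ?thesis using fA finite_subset by blast
qed

theorem corollary3p4:
  fixes t l :: nat
  assumes "0 < t" and "0 < l" and "l < 2 * t"
  shows "\<exists>S :: (nat set \<times> (nat set \<Rightarrow> bool)) set. finite S \<and>
           (\<forall>(E :: 'a set) indep. matroid E indep \<and> tl_property t l E indep \<longrightarrow>
              (\<exists>(E', I') \<in> S. matroid E' I' \<and> matroid_iso E indep E' I'))"
proof -
  define N where "N = sfb (t * l + 1) l * t"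
  define S where "S = {(E' :: nat set, I' :: nat set \<Rightarrow> bool). E' \<subseteq> {..<N} \<and> (\<forall>X. I' X \<longrightarrow> X \<subseteq> {..<N})}"
  have "S \<subseteq> Pow {..<N} \<times> {I. \<forall>X. I X \<longrightarrow> X \<subseteq> {..<N}}" unfolding S_def by auto
  hence finS: "finite S" using finite_preds[of "{..<N}"] finite_subset by blast
  show ?thesis
  proof (intro exI[of _ S] conjI allI impI finS)
    fix E :: "'a set" and indep
    assume a: "matroid E indep \<and> tl_property t l E indep"
    hence m: "matroid E indep" by blast
    have cE: "card E < N" unfolding N_def using bound[OF m _ assms(3) assms(2)] a by blast
    obtain h where h: "bij_betw h E {0..<card E}" using ex_bij_betw_finite_nat[OF m_finite[OF m]] by blast
    have inj: "inj_on h E" and hE: "h ` E = {0..<card E}" using h unfolding bij_betw_def by auto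
    define I' where "I' = (\<lambda>Y. \<exists>X. indep X \<and> Y = h ` X)"
    have mI: "matroid {0..<card E} I'" using matroid_image[OF m inj] hE unfolding I'_def by simp
    have "(({0..<card E}, I')) \<in> S"
      unfolding S_def using cE m_sub[OF mI] by fastforce
    moreover have "matroid_iso E indep {0..<card E} I'"
      unfolding matroid_iso_def
    proof (intro exI[of _ h] conjI allI impI h)
      fix X assume X: "X \<subseteq> E"
      show "indep X = I' (h ` X)"
      proof
        assume "indep X" thus "I' (h ` X)" unfolding I'_def by blast
      next
        assume "I' (h ` X)"
        then obtain X' where X': "indep X'" "h ` X = h ` X'" unfolding I'_def by blast
        have "X' \<subseteq> E" using m_sub[OF m X'(1)] .
        hence "X = X'" using X X'(2) inj by (simp add: inj_on_image_eq_iff)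
        thus "indep X" using X'(1) by simp
      qed
    qed
    ultimately show "\<exists>(E', I') \<in> S. matroid E' I' \<and> matroid_iso E indep E' I'"
      using mI by blast
  qed
qed

end
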